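(* Let $n\ge2$. Then $\Gamma^k=\Gamma^{n-k}$ for all $k=1,\dots,n-1$.
   Context: Let $\mathrm{C}$ be either the real Clifford algebra $C\ell_{p,q}$ with $p+q=n$, or the complex Clifford algebra $C\ell(\mathbb{C}^n)$. It has identity $e$ and generators $e_1,\dots,e_n$ satisfying $e_ae_b+e_be_a=2\eta_{ab}e$. In the real case $\eta=\mathrm{diag}(1,\dots,1,-1,\dots,-1)$ with $p$ entries $+1$ and $q$ entries $-1$. In the complex case $\eta=I_n$. $\mathrm{C}^k$ is the grade-$k$ subspace, spanned by the products $e_{a_1}\cdots e_{a_k}$ with $a_1<\dots<a_k$. $\mathrm{C}^\times$ is the group of invertible elements. $\Gamma^k=\{T\in\mathrm{C}^\times: T\,\mathrm{C}^k\,T^{-1}\subseteq\mathrm{C}^k\}$. *)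

theory Defs
  imports Complex_Main
begin

text \<open>Concrete model of the Clifford algebra on generators e_0,...,e_(n-1) with
  e_a e_b + e_b e_a = 2 eta(a,b) e, eta diagonal with entries eta a.
  An element is a coefficient function on basis blades e_A, A a subset of {0..<n}
  (e_A = product of e_a for a in A in increasing order; e_{} = e).\<close>

definition cl_carrier :: "nat \<Rightarrow> (nat set \<Rightarrow> 'a::field) set" where
  "cl_carrier n = {x. \<forall>A. \<not> A \<subseteq> {..<n} \<longrightarrow> x A = 0}"

text \<open>e_A e_B = (-1)^{#(a,b) in A x B with b<a} (prod_{i in A cap B} eta i) e_{A symdiff B}\<close>
definition blade_sign :: "(nat \<Rightarrow> 'a::field) \<Rightarrow> nat set \<Rightarrow> nat set \<Rightarrow> 'a" where
  "blade_sign eta A B =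
     (-1) ^ card {(a, b). a \<in> A \<and> b \<in> B \<and> b < a} * (\<Prod>i\<in>A \<inter> B. eta i)"

definition cl_mult :: "nat \<Rightarrow> (nat \<Rightarrow> 'a::field) \<Rightarrow> (nat set \<Rightarrow> 'a) \<Rightarrow> (nat set \<Rightarrow> 'a) \<Rightarrow> (nat set \<Rightarrow> 'a)" where
  "cl_mult n eta x y = (\<lambda>C. if C \<subseteq> {..<n} then
      (\<Sum>A\<in>Pow {..<n}. \<Sum>B\<in>Pow {..<n}.
         if (A - B) \<union> (B - A) = C then x A * y B * blade_sign eta A B else 0)
     else 0)"

definition cl_one :: "nat set \<Rightarrow> 'a::field" where
  "cl_one = (\<lambda>A. if A = {} then 1 else 0)"

definition cl_grade :: "nat \<Rightarrow> nat \<Rightarrow> (nat set \<Rightarrow> 'a::field) set" where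
  "cl_grade n k = {x \<in> cl_carrier n. \<forall>A. card A \<noteq> k \<longrightarrow> x A = 0}"

definition cl_Gamma :: "nat \<Rightarrow> (nat \<Rightarrow> 'a::field) \<Rightarrow> nat \<Rightarrow> (nat set \<Rightarrow> 'a) set" where
  "cl_Gamma n eta k = {T \<in> cl_carrier n. \<exists>S \<in> cl_carrier n.
      cl_mult n eta T S = cl_one \<and> cl_mult n eta S T = cl_one \<and>
      (\<forall>X \<in> cl_grade n k. cl_mult n eta (cl_mult n eta T X) S \<in> cl_grade n k)}"

definition eta_real :: "nat \<Rightarrow> nat \<Rightarrow> real" where
  "eta_real p i = (if i < p then 1 else -1)"

definition eta_complex :: "nat \<Rightarrow> complex" where
  "eta_complex i = 1"

end

theory Submission
  imports Defs
begin


definition sd :: "nat set \<Rightarrow> nat set \<Rightarrow> nat set" where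
  "sd A B = (A - B) \<union> (B - A)"

lemma sd_eq_iff: "sd A B = C \<longleftrightarrow> B = sd A C"
  unfolding sd_def by blast

lemma sd_sd[simp]: "sd A (sd A C) = C"
  unfolding sd_def by blast

lemma sd_sub: "A \<subseteq> U \<Longrightarrow> B \<subseteq> U \<Longrightarrow> sd A B \<subseteq> U"
  unfolding sd_def by blast

lemma mult_alt:
  "cl_mult n eta x y C = (if C \<subseteq> {..<n} then
     (\<Sum>A\<in>Pow {..<n}. x A * y (sd A C) * blade_sign eta A (sd A C)) else 0)"
proof (cases "C \<subseteq> {..<n}")
  case True
  have "\<And>A. A \<in> Pow {..<n} \<Longrightarrow> (\<Sum>B\<in>Pow {..<n}.
         if (A - B) \<union> (B - A) = C then x A * y B * blade_sign eta A B else 0)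
       = x A * y (sd A C) * blade_sign eta A (sd A C)"
  proof -
    fix A assume A: "A \<in> Pow {..<n}"
    have "(\<Sum>B\<in>Pow {..<n}.
         if (A - B) \<union> (B - A) = C then x A * y B * blade_sign eta A B else 0)
       = (\<Sum>B\<in>Pow {..<n}. if B = sd A C then x A * y B * blade_sign eta A B else 0)"
      by (rule sum.cong) (auto simp: sd_eq_iff[unfolded sd_def] sd_def)
    also have "\<dots> = x A * y (sd A C) * blade_sign eta A (sd A C)"
      using A True by (simp add: sum.delta' sd_sub)
    finally show "?thesis A" .
  qed
  then show ?thesis using True unfolding cl_mult_def by simp
qed (simp add: cl_mult_def)




lemma sign_prod:
  fixes eta :: "nat \<Rightarrow> 'a::field"
  assumes U: "finite U" "A \<subseteq> U" "B \<subseteq> U"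
  shows "blade_sign eta A B =
    (\<Prod>p\<in>U\<times>U. if fst p \<in> A \<and> snd p \<in> B \<and> snd p < fst p then -1 else 1) *
    (\<Prod>i\<in>U. if i \<in> A \<and> i \<in> B then eta i else 1)"
proof -
  have S: "{(a, b). a \<in> A \<and> b \<in> B \<and> b < a} = (U\<times>U) \<inter> {p. fst p \<in> A \<and> snd p \<in> B \<and> snd p < fst p}"
    using U by auto
  have 1: "(\<Prod>p\<in>U\<times>U. if fst p \<in> A \<and> snd p \<in> B \<and> snd p < fst p then -1 else 1)
      = ((-1::'a) ^ card {(a, b). a \<in> A \<and> b \<in> B \<and> b < a})"
    unfolding S by (simp add: prod.If_cases U)
  have 2: "(\<Prod>i\<in>U. if i \<in> A \<and> i \<in> B then eta i else 1) = (\<Prod>i\<in>A \<inter> B. eta i)"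
  proof -
    have "U \<inter> {i. i \<in> A \<and> i \<in> B} = A \<inter> B" using U by auto
    then show ?thesis by (simp add: prod.If_cases U)
  qed
  show ?thesis unfolding blade_sign_def 1 2 ..
qed




lemma cocycle:
  fixes eta :: "nat \<Rightarrow> 'a::field"
  assumes "finite A" "finite B" "finite E"
  shows "blade_sign eta A B * blade_sign eta (sd A B) E =
         blade_sign eta B E * blade_sign eta A (sd B E)"
proof -
  define U where "U = A \<union> B \<union> E"
  have U: "finite U" "A \<subseteq> U" "B \<subseteq> U" "E \<subseteq> U" "sd A B \<subseteq> U" "sd B E \<subseteq> U"
    using assms by (auto simp: U_def sd_def)
  have P: "(\<Prod>p\<in>U\<times>U. if fst p \<in> A \<and> snd p \<in> B \<and> snd p < fst p then -1 else (1::'a)) *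
    (\<Prod>p\<in>U\<times>U. if fst p \<in> sd A B \<and> snd p \<in> E \<and> snd p < fst p then -1 else 1)
   = (\<Prod>p\<in>U\<times>U. if fst p \<in> B \<and> snd p \<in> E \<and> snd p < fst p then -1 else 1) *
    (\<Prod>p\<in>U\<times>U. if fst p \<in> A \<and> snd p \<in> sd B E \<and> snd p < fst p then -1 else 1)"
    unfolding prod.distrib[symmetric]
    by (rule prod.cong) (auto simp: sd_def)
  have Q: "(\<Prod>i\<in>U. if i \<in> A \<and> i \<in> B then eta i else 1) *
    (\<Prod>i\<in>U. if i \<in> sd A B \<and> i \<in> E then eta i else 1)
   = (\<Prod>i\<in>U. if i \<in> B \<and> i \<in> E then eta i else 1) *
    (\<Prod>i\<in>U. if i \<in> A \<and> i \<in> sd B E then eta i else 1)"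
    unfolding prod.distrib[symmetric]
    by (rule prod.cong) (auto simp: sd_def)
  have aux: "\<And>a b c d::'a. (a*b)*(c*d) = (a*c)*(b*d)" by (simp add: mult_ac)
  show ?thesis
    unfolding sign_prod[OF U(1,2,3)] sign_prod[OF U(1,5,4)] sign_prod[OF U(1,3,4)] sign_prod[OF U(1,2,6)]
    by (subst (1 2) aux) (simp only: P Q)
qed

lemma finite_Pow_sub: "A \<in> Pow {..<n::nat} \<Longrightarrow> finite A"
  by (meson PowD finite_lessThan finite_subset)

lemma assoc:
  fixes eta :: "nat \<Rightarrow> 'a::field"
  shows "cl_mult n eta (cl_mult n eta x y) z = cl_mult n eta x (cl_mult n eta y z)"
proof
  fix D
  let ?P = "Pow {..<n}"
  let ?s = "blade_sign eta"
  show "cl_mult n eta (cl_mult n eta x y) z D = cl_mult n eta x (cl_mult n eta y z) D"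
  proof (cases "D \<subseteq> {..<n}")
    case False then show ?thesis by (simp add: mult_alt)
  next
    case True
    have "cl_mult n eta (cl_mult n eta x y) z D =
      (\<Sum>C\<in>?P. (\<Sum>A\<in>?P. x A * y (sd A C) * ?s A (sd A C)) * z (sd C D) * ?s C (sd C D))"
      using True by (simp add: mult_alt)
    also have "\<dots> = (\<Sum>C\<in>?P. \<Sum>A\<in>?P. x A * y (sd A C) * z (sd C D) * (?s A (sd A C) * ?s C (sd C D)))"
      unfolding sum_distrib_right by (simp add: mult_ac)
    also have "\<dots> = (\<Sum>A\<in>?P. \<Sum>C\<in>?P. x A * y (sd A C) * z (sd C D) * (?s A (sd A C) * ?s C (sd C D)))"
      by (rule sum.swap)
    also have "\<dots> = (\<Sum>A\<in>?P. \<Sum>B\<in>?P. x A * y B * z (sd (sd A B) D) * (?s A B * ?s (sd A B) (sd (sd A B) D)))"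
    proof (rule sum.cong[OF refl])
      fix A assume A: "A \<in> ?P"
      show "(\<Sum>C\<in>?P. x A * y (sd A C) * z (sd C D) * (?s A (sd A C) * ?s C (sd C D))) =
            (\<Sum>B\<in>?P. x A * y B * z (sd (sd A B) D) * (?s A B * ?s (sd A B) (sd (sd A B) D)))"
        by (rule sum.reindex_bij_witness[where i="sd A" and j="sd A"]) (use A in \<open>auto simp: sd_sub\<close>)
    qed
    also have "\<dots> = (\<Sum>A\<in>?P. \<Sum>B\<in>?P. x A * y B * z (sd B (sd A D)) * (?s B (sd B (sd A D)) * ?s A (sd A D)))"
    proof (intro sum.cong refl)
      fix A B assume A: "A \<in> ?P" and B: "B \<in> ?P"
      have e: "sd (sd A B) D = sd B (sd A D)" by (auto simp: sd_def)
      have f: "sd B (sd B (sd A D)) = sd A D" by simp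
      have "?s A B * ?s (sd A B) (sd B (sd A D)) = ?s B (sd B (sd A D)) * ?s A (sd B (sd B (sd A D)))"
        by (rule cocycle) (use A B True in \<open>auto intro: finite_subset simp: sd_def\<close>)
      then show "x A * y B * z (sd (sd A B) D) * (?s A B * ?s (sd A B) (sd (sd A B) D)) =
          x A * y B * z (sd B (sd A D)) * (?s B (sd B (sd A D)) * ?s A (sd A D))"
        unfolding e f by simp
    qed
    also have "\<dots> = (\<Sum>A\<in>?P. x A * (\<Sum>B\<in>?P. y B * z (sd B (sd A D)) * ?s B (sd B (sd A D))) * ?s A (sd A D))"
      by (simp add: sum_distrib_left sum_distrib_right mult_ac)
    also have "\<dots> = cl_mult n eta x (cl_mult n eta y z) D"
      using True by (simp add: mult_alt sd_sub)
    finally show ?thesis .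
  qed
qed




lemma sd_simps[simp]: "sd (sd A B) A = B" "sd (sd A B) B = A" "sd B (sd A B) = A"
  unfolding sd_def by blast+

definition dl :: "nat set \<Rightarrow> nat set \<Rightarrow> 'a::field" where
  "dl A = (\<lambda>C. if C = A then 1 else 0)"

definition sm :: "'a::field \<Rightarrow> (nat set \<Rightarrow> 'a) \<Rightarrow> nat set \<Rightarrow> 'a" where
  "sm c x = (\<lambda>A. c * x A)"

definition inv_ct :: "nat set \<Rightarrow> nat set \<Rightarrow> nat" where
  "inv_ct A B = card {(a, b). a \<in> A \<and> b \<in> B \<and> b < a}"

lemma blade_sign_inv: "blade_sign eta A B = (-1) ^ inv_ct A B * (\<Prod>i\<in>A \<inter> B. eta i)"
  unfolding blade_sign_def inv_ct_def ..

lemma mult_carrier: "cl_mult n eta x y \<in> cl_carrier n"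
  unfolding cl_carrier_def cl_mult_def by auto

lemma sd_eq_iff2: "sd A C = B \<longleftrightarrow> A = sd C B"
  unfolding sd_def by blast

lemma mult_dl_right:
  "cl_mult n eta x (dl B) C =
    (if C \<subseteq> {..<n} \<and> B \<subseteq> {..<n} then x (sd C B) * blade_sign eta (sd C B) B else 0)"
proof (cases "C \<subseteq> {..<n}")
  case True
  have "(\<Sum>A\<in>Pow {..<n}. x A * dl B (sd A C) * blade_sign eta A (sd A C)) =
        (\<Sum>A\<in>Pow {..<n}. if A = sd C B then x A * blade_sign eta A B else 0)"
    by (rule sum.cong) (auto simp: dl_def sd_eq_iff2)
  also have "\<dots> = (if B \<subseteq> {..<n} then x (sd C B) * blade_sign eta (sd C B) B else 0)"
  proof (cases "B \<subseteq> {..<n}")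
    case True2: True
    then show ?thesis using True by (simp add: sum.delta' sd_sub)
  next
    case False
    have "sd C B \<notin> Pow {..<n}" using False True unfolding sd_def by blast
    then show ?thesis using False by (simp add: sum.delta')
  qed
  finally show ?thesis using True by (simp add: mult_alt)
qed (simp add: mult_alt)

lemma mult_dl_left:
  "cl_mult n eta (dl A) y C =
    (if C \<subseteq> {..<n} \<and> A \<subseteq> {..<n} then y (sd A C) * blade_sign eta A (sd A C) else 0)"
proof (cases "C \<subseteq> {..<n}")
  case True
  have "(\<Sum>A'\<in>Pow {..<n}. dl A A' * y (sd A' C) * blade_sign eta A' (sd A' C)) =
        (\<Sum>A'\<in>Pow {..<n}. if A' = A then y (sd A' C) * blade_sign eta A' (sd A' C) else 0)"
    by (rule sum.cong) (auto simp: dl_def)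
  then show ?thesis using True by (simp add: mult_alt sum.delta')
qed (simp add: mult_alt)

lemma sm_mult_left: "cl_mult n eta (sm c x) y = sm c (cl_mult n eta x y)"
  by (rule ext) (simp add: mult_alt sm_def sum_distrib_left mult_ac)

lemma sm_mult_right: "cl_mult n eta x (sm c y) = sm c (cl_mult n eta x y)"
  by (rule ext) (simp add: mult_alt sm_def sum_distrib_left mult_ac)

lemma sm_sm: "sm a (sm b x) = sm (a * b) x"
  by (simp add: sm_def mult_ac)

lemma sm_one: "sm 1 x = x"
  by (simp add: sm_def)

lemma cl_one_dl: "cl_one = dl {}"
  unfolding cl_one_def dl_def by (rule ext) simp

lemma sign_empty_left[simp]: "blade_sign eta {} B = 1"
  unfolding blade_sign_def by simp

lemma sign_empty_right[simp]: "blade_sign eta A {} = 1"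
  unfolding blade_sign_def by simp

lemma sd_empty[simp]: "sd {} C = C" "sd C {} = C"
  unfolding sd_def by auto

lemma one_mult: "x \<in> cl_carrier n \<Longrightarrow> cl_mult n eta cl_one x = x"
  by (rule ext) (auto simp: cl_one_dl mult_dl_left cl_carrier_def)

lemma mult_one: "x \<in> cl_carrier n \<Longrightarrow> cl_mult n eta x cl_one = x"
  by (rule ext) (auto simp: cl_one_dl mult_dl_right cl_carrier_def)

lemma sign_nz:
  assumes "\<And>i. eta i \<noteq> (0::'a::field)"
  shows "blade_sign eta A B \<noteq> 0"
proof (cases "finite (A \<inter> B)")
  case True
  then show ?thesis using assms by (simp add: blade_sign_def prod_zero_iff)
qed (simp add: blade_sign_def)

lemma inv_card:
  assumes "finite A" "finite B"
  shows "inv_ct A B + inv_ct B A + card (A \<inter> B) = card A * card B"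
proof -
  let ?X = "{(a, b). a \<in> A \<and> b \<in> B \<and> b < a}"
  let ?Y = "{(a, b). a \<in> A \<and> b \<in> B \<and> a < b}"
  let ?Z = "{(a, b). a \<in> A \<and> b \<in> B \<and> a = b}"
  have fin: "finite (A \<times> B)" using assms by simp
  have AB: "A \<times> B = (?X \<union> ?Y) \<union> ?Z" by auto
  have Ye: "?Y = (\<lambda>(a,b). (b,a)) ` {(a, b). a \<in> B \<and> b \<in> A \<and> b < a}" by auto
  have Y: "card ?Y = inv_ct B A"
    unfolding Ye inv_ct_def by (rule card_image) (auto simp: inj_on_def)
  have Ze: "?Z = (\<lambda>a. (a,a)) ` (A \<inter> B)" by auto
  have Z: "card ?Z = card (A \<inter> B)"
    unfolding Ze by (rule card_image) (auto simp: inj_on_def)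
  have f1: "finite (?X \<union> ?Y)" by (rule finite_subset[OF _ fin]) blast
  have f2: "finite ?Z" by (rule finite_subset[OF _ fin]) blast
  have f3: "finite ?X" by (rule finite_subset[OF _ fin]) blast
  have f4: "finite ?Y" by (rule finite_subset[OF _ fin]) blast
  have "card (A \<times> B) = card (?X \<union> ?Y) + card ?Z"
    unfolding AB by (rule card_Un_disjoint[OF f1 f2]) blast
  also have "card (?X \<union> ?Y) = card ?X + card ?Y"
    by (rule card_Un_disjoint[OF f3 f4]) auto
  finally show ?thesis using Y Z by (simp add: inv_ct_def card_cartesian_product)
qed

lemma swap_sign:
  "blade_sign eta B A = (-1) ^ (inv_ct A B + inv_ct B A) * blade_sign (eta::nat\<Rightarrow>'a::field) A B"
proof -
  have sq: "(-1::'a) ^ inv_ct A B * (-1) ^ inv_ct A B = 1"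
    by (simp flip: power_add)
  have "(-1::'a) ^ (inv_ct A B + inv_ct B A) * (-1) ^ inv_ct A B = (-1) ^ inv_ct B A * ((-1) ^ inv_ct A B * (-1) ^ inv_ct A B)"
    by (simp add: power_add mult_ac)
  also have "\<dots> = (-1) ^ inv_ct B A" using sq by simp
  finally have e: "(-1::'a) ^ (inv_ct A B + inv_ct B A) * (-1) ^ inv_ct A B = (-1) ^ inv_ct B A" .
  show ?thesis unfolding blade_sign_inv mult.assoc[symmetric] e by (simp add: Int_commute)
qed




lemma sd_comm: "sd A B = sd B A" unfolding sd_def by blast
lemma sd_simp2[simp]: "sd A (sd B A) = B" unfolding sd_def by blast

lemma sm_grade: "X \<in> cl_grade n j \<Longrightarrow> sm c X \<in> cl_grade n j"
  by (simp add: cl_grade_def cl_carrier_def sm_def)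

lemma dl_grade: "A \<subseteq> {..<n} \<Longrightarrow> card A = k \<Longrightarrow> dl A \<in> cl_grade n k"
  by (auto simp: cl_grade_def cl_carrier_def dl_def)

lemma grade_I:
  assumes X: "X \<in> cl_grade n j" and j: "j \<le> n"
  shows "cl_mult n eta X (dl {..<n}) \<in> cl_grade n (n - j)"
  unfolding cl_grade_def
proof (intro CollectI conjI allI impI mult_carrier)
  fix A :: "nat set" assume cA: "card A \<noteq> n - j"
  show "cl_mult n eta X (dl {..<n}) A = 0"
  proof (cases "A \<subseteq> {..<n}")
    case True
    have e: "sd A {..<n} = {..<n} - A" using True unfolding sd_def by blast
    have "card ({..<n} - A) = n - card A" using True by (simp add: card_Diff_subset finite_subset)
    moreover have "card A \<le> n" using True by (metis card_lessThan card_mono finite_lessThan)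
    ultimately have "card (sd A {..<n}) \<noteq> j" using cA j e by auto
    then have "X (sd A {..<n}) = 0" using X by (simp add: cl_grade_def)
    then show ?thesis by (simp add: mult_dl_right)
  qed (simp add: mult_dl_right)
qed

lemma I_I: "cl_mult n eta (dl {..<n}) (dl {..<n}) = sm (blade_sign eta {..<n} {..<n}) cl_one"
proof
  fix C :: "nat set"
  have e: "sd C {..<n} = {..<n} \<longleftrightarrow> C = {}" unfolding sd_def by blast
  show "cl_mult n eta (dl {..<n}) (dl {..<n}) C = sm (blade_sign eta {..<n} {..<n}) cl_one C"
    unfolding mult_dl_right sm_def cl_one_def
    by (cases "C = {}") (simp_all add: e dl_def)
qed

lemma I_twist:
  fixes eta :: "nat \<Rightarrow> 'a::field"
  assumes X: "X \<in> cl_grade n k"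
  shows "cl_mult n eta (dl {..<n}) X = sm ((-1) ^ (k * n - k)) (cl_mult n eta X (dl {..<n}))"
proof
  fix C
  show "cl_mult n eta (dl {..<n}) X C = sm ((-1) ^ (k * n - k)) (cl_mult n eta X (dl {..<n})) C"
  proof (cases "C \<subseteq> {..<n}")
    case True
    define D where "D = sd C {..<n}"
    have D2: "sd {..<n} C = D" unfolding D_def by (rule sd_comm)
    show ?thesis
    proof (cases "X D = 0")
      case True2: True
      then show ?thesis using True by (simp add: mult_dl_right mult_dl_left D2 sm_def D_def[symmetric])
    next
      case False
      then have Dn: "D \<subseteq> {..<n}" and cD: "card D = k" using X by (auto simp: cl_grade_def cl_carrier_def)
      have fD: "finite D" using Dn finite_subset by blast
      have "inv_ct D {..<n} + inv_ct {..<n} D + card (D \<inter> {..<n}) = card D * card {..<n}"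
        by (rule inv_card) (use fD in auto)
      moreover have "D \<inter> {..<n} = D" using Dn by blast
      ultimately have m: "inv_ct D {..<n} + inv_ct {..<n} D = k * n - k" using cD by simp
      have s: "blade_sign eta {..<n} D = (-1) ^ (k * n - k) * blade_sign eta D {..<n}"
        using swap_sign[of eta "{..<n}" D] m by simp
      show ?thesis using True Dn
        by (simp add: mult_dl_right mult_dl_left D2 sm_def D_def[symmetric] s mult_ac)
    qed
  qed (simp add: mult_dl_right mult_dl_left sm_def)
qed




lemma tw_center:
  fixes eta :: "nat \<Rightarrow> 'a::field_char_0"
  assumes nz: "\<And>i. eta i \<noteq> 0"
    and Y: "Y \<in> cl_carrier n" and k: "1 \<le> k" "k < n"
    and tw: "\<forall>X\<in>cl_grade n k. cl_mult n eta Y X = sm \<sigma> (cl_mult n eta X Y)"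
    and B: "B \<noteq> {}" "B \<noteq> {..<n}"
  shows "Y B = 0"
proof (rule ccontr)
  assume YB: "Y B \<noteq> 0"
  then have Bn: "B \<subseteq> {..<n}" using Y by (auto simp: cl_carrier_def)
  have fB: "finite B" using Bn finite_subset by blast
  have key: "(-1) ^ (inv_ct A B + inv_ct B A) = \<sigma>" if A: "A \<subseteq> {..<n}" "card A = k" for A
  proof -
    have "cl_mult n eta Y (dl A) = sm \<sigma> (cl_mult n eta (dl A) Y)"
      using tw dl_grade[OF A] by blast
    then have "cl_mult n eta Y (dl A) (sd B A) = sm \<sigma> (cl_mult n eta (dl A) Y) (sd B A)"
      by simp
    moreover have "sd B A \<subseteq> {..<n}" using A(1) Bn by (simp add: sd_sub)
    ultimately have "Y B * blade_sign eta B A = \<sigma> * (Y B * blade_sign eta A B)"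
      using A by (simp add: mult_dl_right mult_dl_left sm_def)
    then have "Y B * blade_sign eta A B * ((-1) ^ (inv_ct A B + inv_ct B A) - \<sigma>) = 0"
      unfolding swap_sign[of eta B A] by (simp add: algebra_simps)
    then show ?thesis using YB sign_nz[OF nz] by simp
  qed
  obtain b where b: "b \<in> B" using B by blast
  obtain c where c: "c \<in> {..<n}" "c \<notin> B" using B Bn by blast
  have bc: "b \<noteq> c" "b \<in> {..<n}" using b c Bn by auto
  have "card ({..<n} - {b, c}) = n - 2"
    using bc c by (subst card_Diff_subset) auto
  then have "k - 1 \<le> card ({..<n} - {b, c})" using k by simp
  then obtain A0 where A0: "A0 \<subseteq> {..<n} - {b, c}" "card A0 = k - 1" "finite A0"
    by (rule obtain_subset_with_card_n)
  have nb: "b \<notin> A0" "c \<notin> A0" using A0(1) by blast+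
  define A1 where "A1 = insert b A0"
  define A2 where "A2 = insert c A0"
  have A1: "A1 \<subseteq> {..<n}" "card A1 = k" using A0 bc k nb by (auto simp: A1_def)
  have A2: "A2 \<subseteq> {..<n}" "card A2 = k" using A0 bc c k nb by (auto simp: A2_def)
  have i1: "A1 \<inter> B = insert b (A0 \<inter> B)" using b by (auto simp: A1_def)
  have i2: "A2 \<inter> B = A0 \<inter> B" using c by (auto simp: A2_def)
  have ci1: "card (A1 \<inter> B) = card (A0 \<inter> B) + 1" unfolding i1 using A0 nb by simp
  have m1: "inv_ct A1 B + inv_ct B A1 + card (A1 \<inter> B) = card A1 * card B"
    by (rule inv_card) (use A0 fB in \<open>auto simp: A1_def\<close>)
  have m2: "inv_ct A2 B + inv_ct B A2 + card (A2 \<inter> B) = card A2 * card B"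
    by (rule inv_card) (use A0 fB in \<open>auto simp: A2_def\<close>)
  have "inv_ct A2 B + inv_ct B A2 = Suc (inv_ct A1 B + inv_ct B A1)"
    using m1 m2 ci1 i2 A1 A2 by simp
  then have "(-1::'a) ^ (inv_ct A2 B + inv_ct B A2) = - ((-1) ^ (inv_ct A1 B + inv_ct B A1))"
    by simp
  then have "\<sigma> = - \<sigma>" using key[OF A1] key[OF A2] by simp
  then have "\<sigma> = 0" by simp
  then show False using key[OF A1] by simp
qed




context
  fixes n :: nat and eta :: "nat \<Rightarrow> 'a::field_char_0"
begin

abbreviation M (infixl "\<odot>" 70) where "x \<odot> y \<equiv> cl_mult n eta x y"
abbreviation II :: "nat set \<Rightarrow> 'a" where "II \<equiv> dl {..<n}"

lemma Gamma_sub: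
  assumes nz: "\<And>i. eta i \<noteq> 0" and k: "1 \<le> k" "k < n"
    and T: "T \<in> cl_Gamma n eta k"
  shows "T \<in> cl_Gamma n eta (n - k)"
proof -
  obtain U where Tc: "T \<in> cl_carrier n" and Uc: "U \<in> cl_carrier n"
    and TU: "T \<odot> U = cl_one" and UT: "U \<odot> T = cl_one"
    and cj: "\<forall>X\<in>cl_grade n k. T \<odot> X \<odot> U \<in> cl_grade n k"
    using T unfolding cl_Gamma_def by blast
  define \<sigma> :: 'a where "\<sigma> = (-1) ^ (k * n - k)"
  define Y where "Y = U \<odot> II \<odot> T"
  have gc: "X \<in> cl_grade n j \<Longrightarrow> X \<in> cl_carrier n" for X j by (simp add: cl_grade_def)
  have tw: "\<forall>X\<in>cl_grade n k. Y \<odot> X = sm \<sigma> (X \<odot> Y)"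
  proof
    fix X :: "nat set \<Rightarrow> 'a" assume X: "X \<in> cl_grade n k"
    define Z where "Z = T \<odot> X \<odot> U"
    have Zg: "Z \<in> cl_grade n k" using cj X by (simp add: Z_def)
    have e1: "Z \<odot> T = T \<odot> X"
      unfolding Z_def by (simp only: assoc UT mult_one[OF gc[OF X]])
    have e2: "U \<odot> Z = X \<odot> U"
      unfolding Z_def by (simp add: assoc[symmetric] UT one_mult gc[OF X])
    have "Y \<odot> X = U \<odot> II \<odot> (T \<odot> X)" by (simp add: Y_def assoc)
    also have "\<dots> = U \<odot> (II \<odot> Z) \<odot> T" by (simp add: e1[symmetric] assoc)
    also have "\<dots> = U \<odot> sm \<sigma> (Z \<odot> II) \<odot> T" by (simp add: I_twist[OF Zg] \<sigma>_def)
    also have "\<dots> = sm \<sigma> (U \<odot> Z \<odot> II \<odot> T)" by (simp add: sm_mult_left sm_mult_right assoc)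
    also have "\<dots> = sm \<sigma> (X \<odot> Y)" by (simp add: e2 Y_def assoc)
    finally show "Y \<odot> X = sm \<sigma> (X \<odot> Y)" .
  qed
  have IIc: "II \<in> cl_carrier n" by (auto simp: dl_def cl_carrier_def)
  have Yc: "Y \<in> cl_carrier n" unfolding Y_def by (rule mult_carrier)
  have Y0: "Y B = 0" if "B \<noteq> {}" "B \<noteq> {..<n}" for B
    by (rule tw_center[OF nz Yc k tw that])
  define a where "a = Y {}"
  define b where "b = Y {..<n}"
  have ne: "{..<n} \<noteq> ({}::nat set)" using k by auto
  define \<epsilon> where "\<epsilon> = blade_sign eta {..<n} {..<n}"
  have \<epsilon>nz: "\<epsilon> \<noteq> 0" unfolding \<epsilon>_def by (rule sign_nz[OF nz])
  have II: "II \<odot> II = sm \<epsilon> cl_one" unfolding \<epsilon>_def by (rule I_I)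
  have YY: "Y \<odot> Y = sm \<epsilon> cl_one"
  proof -
    have "Y \<odot> Y = U \<odot> (II \<odot> (T \<odot> U) \<odot> (II \<odot> T))" by (simp add: Y_def assoc)
    also have "\<dots> = U \<odot> (II \<odot> II \<odot> T)" by (simp add: TU one_mult mult_carrier assoc)
    also have "\<dots> = sm \<epsilon> cl_one" by (simp add: II sm_mult_left sm_mult_right one_mult Tc UT)
    finally show ?thesis .
  qed
  have "(Y \<odot> Y) {..<n} = 0" using ne by (simp add: YY sm_def cl_one_def)
  moreover have "(Y \<odot> Y) {..<n} = 2 * a * b"
  proof -
    let ?f = "\<lambda>A. Y A * Y (sd A {..<n}) * blade_sign eta A (sd A {..<n})"
    have "(Y \<odot> Y) {..<n} = (\<Sum>A\<in>Pow {..<n}. ?f A)" by (simp add: mult_alt)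
    also have "\<dots> = (\<Sum>A\<in>{{}, {..<n}}. ?f A)"
      by (rule sum.mono_neutral_right) (auto simp: Y0)
    also have "\<dots> = a * b + b * a"
      using ne by (simp add: a_def b_def sd_def)
    finally show ?thesis by simp
  qed
  ultimately have ab: "a = 0 \<or> b = 0" by simp
  have TYU: "T \<odot> Y \<odot> U = II"
    by (simp add: Y_def assoc TU) (simp add: assoc[symmetric] TU one_mult mult_one dl_def cl_carrier_def)
  have bnz: "b \<noteq> 0"
  proof
    assume b0: "b = 0"
    have "Y = sm a cl_one"
    proof
      fix B show "Y B = sm a cl_one B"
        using Y0[of B] b0 by (cases "B = {}") (auto simp: a_def b_def sm_def cl_one_def)
    qed
    then have "T \<odot> Y \<odot> U = sm a cl_one"
      by (simp add: sm_mult_left sm_mult_right one_mult mult_one Tc Uc TU)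
    then have "II {..<n} = sm a cl_one {..<n}" using TYU by simp
    then show False using ne by (simp add: dl_def sm_def cl_one_def)
  qed
  then have a0: "a = 0" using ab by simp
  have Yb: "Y = sm b II"
  proof
    fix B show "Y B = sm b II B"
      using Y0[of B] a0 by (cases "B = {}"; cases "B = {..<n}") (auto simp: a_def b_def sm_def dl_def ne)
  qed
  have TI: "T \<odot> II = sm (1 / b) (II \<odot> T)"
  proof -
    have "T \<odot> Y = II \<odot> T" by (simp add: Y_def assoc[symmetric] TU one_mult[OF IIc])
    then have "sm b (T \<odot> II) = II \<odot> T" by (simp add: Yb sm_mult_right)
    then have "sm (1/b) (sm b (T \<odot> II)) = sm (1/b) (II \<odot> T)" by simp
    then show ?thesis using bnz by (simp add: sm_sm sm_one)
  qed
  have TIU: "T \<odot> II \<odot> U = sm (1 / b) II"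
    by (simp add: TI sm_mult_left assoc TU) (simp add: mult_one dl_def cl_carrier_def)
  show ?thesis unfolding cl_Gamma_def
  proof (intro CollectI conjI bexI[of _ U] Tc Uc TU UT ballI)
    fix X :: "nat set \<Rightarrow> 'a" assume X: "X \<in> cl_grade n (n - k)"
    define W where "W = sm (1 / \<epsilon>) (X \<odot> II)"
    have Wg: "W \<in> cl_grade n k"
      unfolding W_def using grade_I[OF X, of eta] k by (auto intro: sm_grade)
    have WI: "W \<odot> II = X"
      unfolding W_def using \<epsilon>nz
      by (simp add: sm_mult_left assoc II sm_mult_right mult_one gc[OF X] sm_sm sm_one)
    have WUT: "W \<odot> (U \<odot> T) = W" by (simp add: UT mult_one gc[OF Wg])
    have "T \<odot> X \<odot> U = T \<odot> W \<odot> (U \<odot> T) \<odot> II \<odot> U"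
      by (simp only: WI[symmetric] WUT assoc)
    also have "\<dots> = (T \<odot> W \<odot> U) \<odot> (T \<odot> II \<odot> U)" by (simp add: assoc)
    also have "\<dots> = sm (1 / b) ((T \<odot> W \<odot> U) \<odot> II)" by (simp add: TIU sm_mult_right)
    finally show "T \<odot> X \<odot> U \<in> cl_grade n (n - k)"
      using grade_I[OF cj[rule_format, OF Wg], of eta] k by (auto intro: sm_grade)
  qed
qed

end



lemma Gamma_eq:
  fixes eta :: "nat \<Rightarrow> 'a::field_char_0"
  assumes nz: "\<And>i. eta i \<noteq> 0" and k: "1 \<le> k" "k \<le> n - 1" and n: "n \<ge> 2"
  shows "cl_Gamma n eta k = cl_Gamma n eta (n - k)"
proof
  have k': "k < n" using k n by simp
  show "cl_Gamma n eta k \<subseteq> cl_Gamma n eta (n - k)"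
    using Gamma_sub[where eta=eta, OF nz k(1) k'] by blast
  have "cl_Gamma n eta (n - k) \<subseteq> cl_Gamma n eta (n - (n - k))"
    using Gamma_sub[where eta=eta, OF nz, of "n - k" n] k' k by auto
  then show "cl_Gamma n eta (n - k) \<subseteq> cl_Gamma n eta k" using k' by simp
qed

theorem mainTheorem13:
  fixes n :: nat
  assumes "n \<ge> 2"
  shows "(\<forall>p q k. p + q = n \<longrightarrow> 1 \<le> k \<longrightarrow> k \<le> n - 1 \<longrightarrow>
            cl_Gamma n (eta_real p) k = cl_Gamma n (eta_real p) (n - k))
       \<and> (\<forall>k. 1 \<le> k \<longrightarrow> k \<le> n - 1 \<longrightarrow>
            cl_Gamma n eta_complex k = cl_Gamma n eta_complex (n - k))"
proof (intro conjI allI impI)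
  fix p q k :: nat
  assume "1 \<le> k" "k \<le> n - 1"
  then show "cl_Gamma n (eta_real p) k = cl_Gamma n (eta_real p) (n - k)"
    by (intro Gamma_eq assms) (auto simp: eta_real_def)
next
  fix k :: nat
  assume "1 \<le> k" "k \<le> n - 1"
  then show "cl_Gamma n eta_complex k = cl_Gamma n eta_complex (n - k)"
    by (intro Gamma_eq assms) (auto simp: eta_complex_def)
qed

end
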